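(* Fix $Y$, $q>0$, $\delta>0$, $\rho\in\mathbb R$, and let $(a^*(\beta),b^*(\beta))$ be the selected pair as a function of $\beta\in(0,1)$. Then: 1. If $\psi_Y'(0+)+q\rho<0$, then for all $\beta<1$ sufficiently close to $1$ one has $0<a^*(\beta)<b^*(\beta)$ and $Z^{(q)}(b^*(\beta)-a^*(\beta))=\beta^{-1}$. In particular, $b^*(\beta)-a^*(\beta)\to0$ as $\beta\uparrow1$. 2. If $\psi_Y'(0+)+q\rho>0$, then $a^*(\beta)=b^*(\beta)=0$ for all $\beta<1$ sufficiently close to $1$. 3. If $\psi_Y'(0+)+q\rho=0$ and $\psi_X'(0+)>0$, then $b^*(\beta)>0$ for every $\beta\in(0,1)$, and $a^*(\beta)\to0$ and $b^*(\beta)\to0$ as $\beta\uparrow1$. 4. If $\psi_Y'(0+)+q\rho=0$ and $\psi_X'(0+)\le0$, then $a^*(\beta)=b^*(\beta)=0$ for all $\beta\in(0,1)$.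
   Context: Let $Y$ be a spectrally positive Lévy process (not a subordinator) with Laplace exponent $\psi_Y(\theta)=\log\mathbb E[e^{-\theta Y_1}]$ and $\mathbb E[Y_1]=-\psi_Y'(0+)<\infty$. Let $q>0$, $\delta>0$, and $\psi_X(\theta)=\psi_Y(\theta)+\delta\theta$ (so $\psi_X'(0+)=\psi_Y'(0+)+\delta$). The scale functions $\mathbb W^{(q)},W^{(q)}$ vanish on $(-\infty,0)$, are continuous and strictly increasing on $[0,\infty)$, and have Laplace transforms $1/(\psi_Y(\theta)-q)$ and $1/(\psi_X(\theta)-q)$. Let $\mathbb Z^{(q)}(x)=1+q\int_0^x\mathbb W^{(q)}$, $Z^{(q)}(x)=1+q\int_0^xW^{(q)}$, $\overline Z^{(q)}(x)=\int_0^xZ^{(q)}$, and $R^{(q)}(z)=\overline Z^{(q)}(z)+\psi_X'(0+)/q$. Let $\tilde r^{(q)}_c(z)=R^{(q)}(z)+\delta\int_c^z\mathbb W^{(q)}(z-y)Z^{(q)}(y)\,dy$. For $\beta\in(0,1)$ and $\rho\in\mathbb R$, let $\Gamma(a,b)=\delta\mathbb Z^{(q)}(a)-q\rho-q\beta\tilde r^{(q)}_{b-a}(b)$ for $0\le a\le b$. Selected pair: if $\Gamma(0,0)=\delta-q\rho-\beta\psi_X'(0+)\le0$, then $a^*=b^*=0$. Otherwise, $b^*>0$ is the unique root of $\min_{0\le a\le b^*}\Gamma(a,b^* )=0$, and $a^*$ is the unique minimizer of $a\mapsto\Gamma(a,b^* )$ on $[0,b^*]$. *)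

theory Defs
  imports "HOL-Analysis.Analysis"
begin

text \<open>A spectrally positive Levy process Y is determined (in law) by its triple
  (gam, sig, Lm): drift parameter gam, Gaussian coefficient sig >= 0 and Levy measure Lm
  concentrated on (0,infinity) with integral of min 1 (x^2) finite. Its Laplace exponent
  psi(th) = log E[exp(-th Y_1)] is, for th >= 0,
  gam th + sig^2 th^2/2 + integral of (exp(-th x) - 1 + th x 1_{x<1}) Lm(dx).\<close>

definition spos_levy_triple :: "real \<Rightarrow> real \<Rightarrow> real measure \<Rightarrow> bool" where
  "spos_levy_triple gam sig Lm \<longleftrightarrow>
     sets Lm = sets borel \<and> sig \<ge> 0 \<and> emeasure Lm {..0} = 0 \<and>
     (\<integral>\<^sup>+ x. ennreal (min 1 (x\<^sup>2)) \<partial>Lm) < \<infinity>"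

text \<open>Y is a subordinator iff it has no Gaussian part, its jumps are of bounded variation
  and its (linear) drift d = -(gam + integral over (0,1) of x Lm(dx)) is nonnegative.\<close>
definition spos_is_subordinator :: "real \<Rightarrow> real \<Rightarrow> real measure \<Rightarrow> bool" where
  "spos_is_subordinator gam sig Lm \<longleftrightarrow>
     sig = 0 \<and> (\<integral>\<^sup>+ x. ennreal (x * indicator {0<..<1} x) \<partial>Lm) < \<infinity> \<and>
     gam + (\<integral>x. x * indicator {0<..<1} x \<partial>Lm) \<le> 0"

text \<open>Finite first moment: E|Y_1| < infinity iff the big jumps are integrable.\<close>
definition spos_finite_mean :: "real measure \<Rightarrow> bool" where
  "spos_finite_mean Lm \<longleftrightarrow> (\<integral>\<^sup>+ x. ennreal (x * indicator {1..} x) \<partial>Lm) < \<infinity>"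

definition laplace_exp :: "real \<Rightarrow> real \<Rightarrow> real measure \<Rightarrow> real \<Rightarrow> real" where
  "laplace_exp gam sig Lm th =
     gam * th + sig\<^sup>2 * th\<^sup>2 / 2 +
     (\<integral>x. exp (- th * x) - 1 + th * x * indicator {..<1} x \<partial>Lm)"

definition rderiv0 :: "(real \<Rightarrow> real) \<Rightarrow> real" where
  "rderiv0 f = (THE D. (f has_real_derivative D) (at 0 within {0..}))"

definition is_scale_fun :: "(real \<Rightarrow> real) \<Rightarrow> real \<Rightarrow> (real \<Rightarrow> real) \<Rightarrow> bool" where
  "is_scale_fun psi q W \<longleftrightarrow>
     (\<forall>x<0. W x = 0) \<and> continuous_on {0..} W \<and> strict_mono_on {0..} W \<and>
     (\<exists>th0. \<forall>th>th0. ((\<lambda>x. exp (- th * x) * W x) has_integral 1 / (psi th - q)) {0..})"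

definition Zs :: "real \<Rightarrow> (real \<Rightarrow> real) \<Rightarrow> real \<Rightarrow> real" where
  "Zs q W x = 1 + q * integral {0..x} W"

definition Zbar :: "real \<Rightarrow> (real \<Rightarrow> real) \<Rightarrow> real \<Rightarrow> real" where
  "Zbar q W x = integral {0..x} (Zs q W)"

text \<open>dX stands for psi_X'(0+).\<close>
definition Rq :: "real \<Rightarrow> (real \<Rightarrow> real) \<Rightarrow> real \<Rightarrow> real \<Rightarrow> real" where
  "Rq q Wx dX z = Zbar q Wx z + dX / q"

definition rtil :: "real \<Rightarrow> real \<Rightarrow> (real \<Rightarrow> real) \<Rightarrow> (real \<Rightarrow> real) \<Rightarrow> real \<Rightarrow> real \<Rightarrow> real \<Rightarrow> real" where
  "rtil q \<delta> Wy Wx dX c z = Rq q Wx dX z + \<delta> * integral {c..z} (\<lambda>y. Wy (z - y) * Zs q Wx y)"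

definition Gam :: "real \<Rightarrow> real \<Rightarrow> real \<Rightarrow> (real \<Rightarrow> real) \<Rightarrow> (real \<Rightarrow> real) \<Rightarrow> real \<Rightarrow> real
                   \<Rightarrow> real \<Rightarrow> real \<Rightarrow> real" where
  "Gam q \<delta> \<rho> Wy Wx dX \<beta> a b =
     \<delta> * Zs q Wy a - q * \<rho> - q * \<beta> * rtil q \<delta> Wy Wx dX (b - a) b"

definition minGam :: "real \<Rightarrow> real \<Rightarrow> real \<Rightarrow> (real \<Rightarrow> real) \<Rightarrow> (real \<Rightarrow> real) \<Rightarrow> real \<Rightarrow> real
                   \<Rightarrow> real \<Rightarrow> real" where
  "minGam q \<delta> \<rho> Wy Wx dX \<beta> b = Inf ((\<lambda>a. Gam q \<delta> \<rho> Wy Wx dX \<beta> a b) ` {0..b})"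

definition bstar :: "real \<Rightarrow> real \<Rightarrow> real \<Rightarrow> (real \<Rightarrow> real) \<Rightarrow> (real \<Rightarrow> real) \<Rightarrow> real \<Rightarrow> real \<Rightarrow> real" where
  "bstar q \<delta> \<rho> Wy Wx dX \<beta> =
     (if Gam q \<delta> \<rho> Wy Wx dX \<beta> 0 0 \<le> 0 then 0
      else (THE b. 0 < b \<and> minGam q \<delta> \<rho> Wy Wx dX \<beta> b = 0))"

definition astar :: "real \<Rightarrow> real \<Rightarrow> real \<Rightarrow> (real \<Rightarrow> real) \<Rightarrow> (real \<Rightarrow> real) \<Rightarrow> real \<Rightarrow> real \<Rightarrow> real" where
  "astar q \<delta> \<rho> Wy Wx dX \<beta> =
     (if Gam q \<delta> \<rho> Wy Wx dX \<beta> 0 0 \<le> 0 then 0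
      else (let b = bstar q \<delta> \<rho> Wy Wx dX \<beta> in
            THE a. a \<in> {0..b} \<and>
              (\<forall>a'\<in>{0..b}. Gam q \<delta> \<rho> Wy Wx dX \<beta> a b \<le> Gam q \<delta> \<rho> Wy Wx dX \<beta> a' b)))"

end

theory Submission
  imports Defs
begin


lemma W0_nonneg:
  fixes W psi :: "real \<Rightarrow> real"
  assumes cont: "continuous_on {0..} W" and mono: "mono_on {0..} W"
    and lap: "\<forall>th>th0. ((\<lambda>x. exp (- th * x) * W x) has_integral 1 / (psi th - q)) {0..}"
    and unb: "\<And>T. \<exists>th>T. psi th > q"
  shows "W 0 \<ge> 0"
proof (rule ccontr)
  assume "\<not> W 0 \<ge> 0"
  hence W0: "W 0 < 0" by simp
  define w where "w = - W 0 / 2"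
  define M where "M = - W 0"
  have w: "w > 0" and M: "M > 0" using W0 by (auto simp: w_def M_def)
  have "continuous (at 0 within {0..}) W" using cont by (simp add: continuous_on_eq_continuous_within)
  then obtain d where d: "d > 0" "\<And>x. x \<in> {0..} \<Longrightarrow> dist x 0 < d \<Longrightarrow> dist (W x) (W 0) < w"
    using w unfolding continuous_within_eps_delta by (metis atLeast_iff order_refl)
  define e where "e = d / 2"
  have e: "e > 0" using d by (simp add: e_def)
  have We: "W x \<le> - w" if "0 \<le> x" "x \<le> e" for x
    using d(2)[of x] that e_def d(1) by (auto simp: dist_real_def w_def)
  have WM: "W x + M \<ge> 0" if "0 \<le> x" for x
    using mono_onD[OF mono, of 0 x] that by (auto simp: M_def)
  define th1 where "th1 = max th0 0 + 1"
  have th1: "th1 > th0" "th1 > 0" by (auto simp: th1_def)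
  define F1 where "F1 = 1 / (psi th1 - q)"
  have I1: "((\<lambda>x. exp (- th1 * x) * W x) has_integral F1) {0..}"
    using lap th1 by (simp add: F1_def)
  define C where "C = F1 + M / th1"
  have IC: "((\<lambda>x. exp (- th1 * x) * W x + M * exp (- th1 * x)) has_integral C) {0..}"
  proof -
    have "((\<lambda>x. exp (- th1 * x)) has_integral exp (- th1 * 0) / th1) {0..}"
      using has_integral_exp_minus_to_infinity[OF th1(2), of 0] by simp
    hence "((\<lambda>x. M * exp (- th1 * x)) has_integral M * (1 / th1)) {0..}"
      by (intro has_integral_mult_right) simp
    thus ?thesis using has_integral_add[OF I1] by (simp add: C_def)
  qed
  define Th where "Th = max th1 ((2/e) * (th1 * e + ln (2 * (\<bar>C\<bar> + 1) / (w * e))))"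
  have neg: "1 / (psi th - q) < 0" if th: "th \<ge> Th" for th
  proof -
    have thth1: "th \<ge> th1" using th by (simp add: Th_def)
    have g_int: "((\<lambda>x. (if x \<in> {0..e/2} then - w * exp (- th * (e/2)) else 0)
        + exp (- (th - th1) * e) * (exp (- th1 * x) * W x + M * exp (- th1 * x)))
        has_integral (- w * exp (- th * (e/2)) * (e/2) + exp (- (th - th1) * e) * C)) {0..}"
    proof (rule has_integral_add)
      have "((\<lambda>x. - w * exp (- th * (e/2))) has_integral (Henstock_Kurzweil_Integration.content {0..e/2} *\<^sub>R (- w * exp (- th * (e/2))))) {0..e/2}"
        by (rule has_integral_const_real)
      hence "((\<lambda>x. - w * exp (- th * (e/2))) has_integral (- w * exp (- th * (e/2)) * (e/2))) {0..e/2}"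
        using e by (simp add: algebra_simps)
      thus "((\<lambda>x. if x \<in> {0..e/2} then - w * exp (- th * (e/2)) else 0) has_integral (- w * exp (- th * (e/2)) * (e/2))) {0..}"
        by (subst has_integral_restrict) auto
      show "((\<lambda>x. exp (- (th - th1) * e) * (exp (- th1 * x) * W x + M * exp (- th1 * x))) has_integral exp (- (th - th1) * e) * C) {0..}"
        by (intro has_integral_mult_right IC)
    qed
    have Ith: "((\<lambda>x. exp (- th * x) * W x) has_integral 1 / (psi th - q)) {0..}"
      using lap thth1 th1 by auto
    have pw: "exp (- th * x) * W x \<le> (if x \<in> {0..e/2} then - w * exp (- th * (e/2)) else 0)
        + exp (- (th - th1) * e) * (exp (- th1 * x) * W x + M * exp (- th1 * x))" if x: "x \<in> {0..}" for x
    proof -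
      have x0: "x \<ge> 0" using x by simp
      have sec: "exp (- (th - th1) * e) * (exp (- th1 * x) * W x + M * exp (- th1 * x)) \<ge> 0"
      proof -
        have "exp (- (th - th1) * e) * (exp (- th1 * x) * (W x + M)) \<ge> 0"
          using WM[OF x0] by simp
        thus ?thesis by (simp add: algebra_simps)
      qed
      show ?thesis
      proof (cases "x \<le> e")
        case True
        have WW: "W x \<le> - w" using We[OF x0 True] .
        have "exp (- th * x) * W x \<le> exp (- th * x) * (- w)" using WW by (intro mult_left_mono) auto
        also have "\<dots> \<le> (if x \<in> {0..e/2} then - w * exp (- th * (e/2)) else 0)"
        proof (cases "x \<le> e/2")
          case True
          have "exp (- th * (e/2)) \<le> exp (- th * x)" using True th1 thth1 x0 
            by (simp add: mult_left_mono)
          thus ?thesis using True x0 w by (simp add: mult_left_mono)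
        next
          case False thus ?thesis using w by (simp add: mult_nonneg_nonneg)
        qed
        finally show ?thesis using sec by linarith
      next
        case False
        have "exp (- th * x) * W x \<le> exp (- th * x) * (W x + M)" using M by simp
        also have "\<dots> = exp (- (th - th1) * x) * (exp (- th1 * x) * (W x + M))"
          by (simp add: algebra_simps flip: exp_add)
        also have "\<dots> \<le> exp (- (th - th1) * e) * (exp (- th1 * x) * (W x + M))"
          using False thth1 WM[OF x0] by (intro mult_right_mono) (auto simp: mult_left_mono_neg)
        finally show ?thesis using False e by (simp add: algebra_simps)
      qed
    qed
    have le: "1 / (psi th - q) \<le> - w * exp (- th * (e/2)) * (e/2) + exp (- (th - th1) * e) * C"
      by (rule has_integral_le[OF Ith g_int pw])
    have "exp (- (th - th1) * e) * C \<le> exp (- (th - th1) * e) * \<bar>C\<bar>" by simp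
    have key: "exp (- (th - th1) * e) * (\<bar>C\<bar> + 1) \<le> exp (- th * (e/2)) * (w * e / 2)"
    proof -
      have "th * (e/2) \<ge> th1 * e + ln (2 * (\<bar>C\<bar> + 1) / (w * e))"
        using th e by (simp add: Th_def field_simps)
      hence "exp (- (th - th1) * e) \<le> exp (- th * (e/2) - ln (2 * (\<bar>C\<bar> + 1) / (w * e)))"
        by (simp add: algebra_simps)
      also have "\<dots> = exp (- th * (e/2)) * ((w * e) / (2 * (\<bar>C\<bar> + 1)))"
        using w e by (simp add: exp_diff)
      finally show ?thesis by (simp add: field_simps)
    qed
    have "exp (- (th - th1) * e) * C < exp (- (th - th1) * e) * (\<bar>C\<bar> + 1)" by simp
    moreover have "- w * exp (- th * (e/2)) * (e/2) = - (exp (- th * (e/2)) * (w * e / 2))"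
      by (simp add: algebra_simps)
    ultimately show ?thesis using key le by linarith
  qed
  obtain th where "th > Th" "psi th > q" using unb by blast
  with neg[of th] show False by (simp add: divide_simps split: if_splits)
qed



lemma exp_neg_upper: assumes "u \<ge> (0::real)" shows "exp (- u) \<le> 1 - u + u\<^sup>2"
proof -
  have "1 + u \<le> exp u" by (rule exp_ge_add_one_self)
  hence "exp (- u) * (1 + u) \<le> exp (-u) * exp u" by (intro mult_left_mono) auto
  moreover have "exp (-u) * exp u = 1" by (simp flip: exp_add)
  ultimately have a: "exp (- u) * (1 + u) \<le> 1" by simp
  have "(1 - u + u\<^sup>2) * (1 + u) = 1 + u^3" by (simp add: algebra_simps power2_eq_square power3_eq_cube)
  also have "\<dots> \<ge> 1" using assms by simp
  finally have "exp (- u) * (1 + u) \<le> (1 - u + u\<^sup>2) * (1 + u)" using a by linarith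
  have "(1::real) + u > 0" using assms by simp
  thus ?thesis using \<open>exp (- u) * (1 + u) \<le> (1 - u + u\<^sup>2) * (1 + u)\<close> by (simp add: mult_le_cancel_right)
qed

lemma psi_unbounded:
  assumes triple: "spos_levy_triple gam sig Lm"
    and not_sub: "\<not> spos_is_subordinator gam sig Lm"
  shows "\<exists>th>T. laplace_exp gam sig Lm th > M"
proof -
  have sets: "sets Lm = sets borel" and sig0: "sig \<ge> 0" and neg0: "emeasure Lm {..0} = 0"
    and fin: "(\<integral>\<^sup>+ x. ennreal (min 1 (x\<^sup>2)) \<partial>Lm) < \<infinity>"
    using triple by (auto simp: spos_levy_triple_def)
  have meas: "borel_measurable Lm = borel_measurable borel"
    by (rule measurable_cong_sets[OF sets refl])
  have space: "space Lm = UNIV" using sets_eq_imp_space_eq[OF sets] by simp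
  have AEpos: "AE x in Lm. x > 0"
  proof (rule AE_I')
    show "{..0::real} \<in> null_sets Lm" using neg0 sets by (auto simp: null_sets_def)
    show "{x \<in> space Lm. \<not> 0 < x} \<subseteq> {..0}" by auto
  qed
  have intm: "integrable Lm (\<lambda>x. min 1 (x\<^sup>2))"
  proof (rule integrableI_nonneg)
    show "(\<lambda>x. min 1 (x\<^sup>2)) \<in> borel_measurable Lm" unfolding meas by measurable
    show "AE x in Lm. 0 \<le> min 1 (x\<^sup>2::real)" by simp
    show "(\<integral>\<^sup>+ x. ennreal (min 1 (x\<^sup>2)) \<partial>Lm) < \<infinity>" by (rule fin)
  qed
  have bnd: "integrable Lm g" if "g \<in> borel_measurable borel" "AE x in Lm. \<bar>g x\<bar> \<le> C * min 1 (x\<^sup>2)" for g C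
  proof (rule Bochner_Integration.integrable_bound)
    show "integrable Lm (\<lambda>x. C * min 1 (x\<^sup>2))" using intm by simp
    show "g \<in> borel_measurable Lm" unfolding meas using that(1) .
    show "AE x in Lm. norm (g x) \<le> norm (C * min 1 (x\<^sup>2))"
      using that(2) by eventually_elim auto
  qed
  define c where "c = measure Lm {1..}"
  have c0: "c \<ge> 0" by (simp add: c_def)
  have intI: "integrable Lm (indicator {1..} :: real \<Rightarrow> real)"
    by (rule bnd[of _ 1]) (auto simp: indicator_def)
  define f where "f th x = exp (- th * x) - 1 + th * x * indicator {..<1} x" for th x :: real
  define h where "h th x = max 0 (x - 1 / th) * indicator {0<..<1} x" for th x :: real
  have fint: "integrable Lm (f th)" if "th > 0" for th
  proof (rule bnd[of _ "1 + th\<^sup>2"])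
    show "f th \<in> borel_measurable borel" unfolding f_def by measurable
    show "AE x in Lm. \<bar>f th x\<bar> \<le> (1 + th\<^sup>2) * min 1 (x\<^sup>2)"
      using AEpos
    proof eventually_elim
      case (elim x)
      show ?case
      proof (cases "x < 1")
        case True
        have u: "th * x \<ge> 0" using that elim by simp
        have lo: "exp (- (th * x)) \<ge> 1 - th * x" using exp_ge_add_one_self[of "- (th*x)"] by simp
        have hi: "exp (- (th * x)) \<le> 1 - th * x + (th * x)\<^sup>2" by (rule exp_neg_upper[OF u])
        have "\<bar>f th x\<bar> \<le> (th * x)\<^sup>2" using lo hi True by (simp add: f_def)
        also have "\<dots> \<le> (1 + th\<^sup>2) * x\<^sup>2" by (simp add: power_mult_distrib mult_right_mono)
        also have "x\<^sup>2 = min 1 (x\<^sup>2)" using True elim by (simp add: power_le_one)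
        finally show ?thesis .
      next
        case False
        have "exp (- th * x) \<le> 1" using that elim by simp
        hence "\<bar>f th x\<bar> \<le> 1" using False by (simp add: f_def)
        also have "1 \<le> (1 + th\<^sup>2) * min 1 (x\<^sup>2)"
        proof -
          have "x\<^sup>2 \<ge> 1" using False by (simp add: one_le_power)
          hence "min 1 (x\<^sup>2) = 1" by simp
          thus ?thesis by simp
        qed
        finally show ?thesis .
      qed
    qed
  qed
  have hint: "integrable Lm (h th)" if "th > 0" for th
  proof (rule bnd[of _ th])
    show "h th \<in> borel_measurable borel" unfolding h_def by measurable
    show "AE x in Lm. \<bar>h th x\<bar> \<le> th * min 1 (x\<^sup>2)"
    proof (rule AE_I2)
      fix x
      show "\<bar>h th x\<bar> \<le> th * min 1 (x\<^sup>2)"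
      proof (cases "x \<in> {0<..<1} \<and> x > 1 / th")
        case True
        hence "x \<le> th * x\<^sup>2" using that by (simp add: field_simps power2_eq_square)
        moreover have "min 1 (x\<^sup>2) = x\<^sup>2" using True by (simp add: power_le_one)
        moreover have "1 / th > 0" using that by simp
        ultimately have a: "x - 1 / th \<le> th * x\<^sup>2" by linarith
        have "h th x = x - 1 / th" using True by (simp add: h_def)
        moreover have "x - 1 / th \<ge> 0" using True by simp
        ultimately show ?thesis using a \<open>min 1 (x\<^sup>2) = x\<^sup>2\<close> by simp
      next
        case False
        hence "h th x = 0" by (auto simp: h_def)
        thus ?thesis using that by simp
      qed
    qed
  qed
  have hpos: "h th x \<ge> 0" for th x by (simp add: h_def)
  have J0: "integral\<^sup>L Lm (h th) \<ge> 0" for th using hpos by (simp add: integral_nonneg_AE)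
  have fge: "f th x \<ge> th * h th x - indicator {1..} x" if "th > 0" "x > 0" for th x
  proof (cases "x < 1")
    case True
    have "exp (- (th * x)) \<ge> 1 - th * x" using exp_ge_add_one_self[of "- (th*x)"] by simp
    hence "f th x \<ge> 0" "f th x \<ge> th * x - 1" using True by (auto simp: f_def)
    moreover have "th * h th x = max 0 (th * x - 1)" using True that
      by (simp add: h_def max_mult_distrib_left right_diff_distrib)
    ultimately show ?thesis using True by (simp add: indicator_def)
  next
    case False
    thus ?thesis by (simp add: f_def h_def indicator_def)
  qed
  have psi_ge: "laplace_exp gam sig Lm th \<ge> gam * th + sig\<^sup>2 * th\<^sup>2 / 2 + th * integral\<^sup>L Lm (h th) - c"
    if th: "th > 0" for th
  proof -
    have "integral\<^sup>L Lm (f th) \<ge> integral\<^sup>L Lm (\<lambda>x. th * h th x - indicator {1..} x)"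
    proof (rule integral_mono_AE)
      show "integrable Lm (\<lambda>x. th * h th x - indicator {1..} x)" using hint[OF th] intI by simp
      show "integrable Lm (f th)" by (rule fint[OF th])
      show "AE x in Lm. th * h th x - indicator {1..} x \<le> f th x"
        using AEpos by eventually_elim (rule fge[OF th])
    qed
    also have "integral\<^sup>L Lm (\<lambda>x. th * h th x - indicator {1..} x) = th * integral\<^sup>L Lm (h th) - c"
      using hint[OF th] intI by (simp add: c_def space)
    finally show ?thesis unfolding laplace_exp_def f_def[abs_def] by simp
  qed
  define J where "J th = integral\<^sup>L Lm (h th)" for th
  have Jmono: "J th0 \<le> J th" if "0 < th0" "th0 \<le> th" for th0 th
  proof -
    have "1 / th \<le> 1 / th0" using that by (simp add: frac_le)
    hence "h th0 x \<le> h th x" for x by (auto simp: h_def indicator_def)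
    thus ?thesis unfolding J_def using that by (intro integral_mono hint) auto
  qed
  show ?thesis
  proof (cases "sig = 0")
    case False
    hence s: "sig\<^sup>2 > 0" using sig0 by simp
    define th where "th = max (max T 0 + 1) (max (2 * (\<bar>gam\<bar> + 1) / sig\<^sup>2) (\<bar>M\<bar> + c + 1))"
    have th1: "th \<ge> 1" "th > T" by (auto simp: th_def)
    have "sig\<^sup>2 * th \<ge> sig\<^sup>2 * (2 * (\<bar>gam\<bar> + 1) / sig\<^sup>2)"
      using s by (intro mult_left_mono) (auto simp: th_def)
    hence "sig\<^sup>2 * th / 2 \<ge> \<bar>gam\<bar> + 1" using s by simp
    hence "gam + sig\<^sup>2 * th / 2 \<ge> 1" by linarith
    hence "th * (gam + sig\<^sup>2 * th / 2) \<ge> th * 1" using th1 by (intro mult_left_mono) auto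
    moreover have "th * J th \<ge> 0" using th1 J0 by (simp add: J_def)
    moreover have "th \<ge> \<bar>M\<bar> + c + 1" by (simp add: th_def)
    moreover have "laplace_exp gam sig Lm th \<ge> gam * th + sig\<^sup>2 * th\<^sup>2 / 2 + th * J th - c"
      using psi_ge[of th] th1 by (simp add: J_def)
    moreover have "th * (gam + sig\<^sup>2 * th / 2) = gam * th + sig\<^sup>2 * th\<^sup>2 / 2"
      by (simp add: algebra_simps power2_eq_square)
    ultimately have "laplace_exp gam sig Lm th > M" by linarith
    thus ?thesis using th1 by blast
  next
    case True
    have ex: "\<exists>n. gam + J (Suc n) > 0"
    proof (cases "gam > 0")
      case True
      thus ?thesis using J0 by (auto simp: J_def intro: add_pos_nonneg)
    next
      case False
      define X where "X = (\<integral>\<^sup>+ x. ennreal (x * indicator {0<..<1} x) \<partial>Lm)"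
      define hn where "hn n x = ennreal (h (Suc n) x)" for n x
      have inc: "incseq hn"
      proof (rule incseq_SucI, rule le_funI)
        fix n x
        have "1 / real (Suc (Suc n)) \<le> 1 / real (Suc n)" by (simp add: frac_le)
        thus "hn n x \<le> hn (Suc n) x" by (auto simp: hn_def h_def indicator_def)
      qed
      have hnm: "hn n \<in> borel_measurable Lm" for n unfolding meas hn_def h_def by measurable
      have sup: "(SUP n. hn n x) = ennreal (x * indicator {0<..<1} x)" for x
      proof -
        have "(\<lambda>n. hn n x) \<longlonglongrightarrow> (SUP n. hn n x)"
          using inc by (intro LIMSEQ_SUP) (auto simp: incseq_def le_fun_def)
        moreover have "(\<lambda>n. hn n x) \<longlonglongrightarrow> ennreal (x * indicator {0<..<1} x)"
        proof -
          have T1: "(\<lambda>n. h (Suc n) x) \<longlonglongrightarrow> max 0 (x - 0) * indicator {0<..<1} x"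
            unfolding h_def by (intro tendsto_intros LIMSEQ_inverse_real_of_nat[unfolded inverse_eq_divide])
          have E: "max 0 (x - 0) * indicator {0<..<1} x = x * indicator {0<..<1} x"
            by (auto simp: indicator_def)
          have L: "(\<lambda>n. h (Suc n) x) \<longlonglongrightarrow> x * indicator {0<..<1} x"
            using T1 unfolding E .
          show ?thesis unfolding hn_def by (rule tendsto_ennrealI[OF L])
        qed
        ultimately show ?thesis using LIMSEQ_unique by blast
      qed
      have XS: "X = (SUP n. integral\<^sup>N Lm (hn n))"
        unfolding X_def sup[symmetric] by (rule nn_integral_monotone_convergence_SUP[OF inc hnm])
      have hnJ: "integral\<^sup>N Lm (hn n) = ennreal (J (Suc n))" for n
        unfolding hn_def J_def by (rule nn_integral_eq_integral[OF hint]) (auto simp: hpos)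
      have "ennreal (- gam) < X"
      proof (cases "X < \<infinity>")
        case False
        hence "X = \<infinity>" by (simp add: less_top[symmetric])
        thus ?thesis by simp
      next
        case True
        have "\<not> (X < \<infinity> \<and> gam + (\<integral>x. x * indicator {0<..<1} x \<partial>Lm) \<le> 0)"
          using not_sub \<open>sig = 0\<close> unfolding spos_is_subordinator_def X_def by simp
        hence "gam + (\<integral>x. x * indicator {0<..<1} x \<partial>Lm) > 0" using True by linarith
        moreover have iX: "integrable Lm (\<lambda>x. x * indicator {0<..<1} x)"
        proof (rule integrableI_nonneg)
          show "(\<lambda>x. x * indicator {0<..<1} x) \<in> borel_measurable Lm" unfolding meas by measurable
          show "AE x in Lm. 0 \<le> x * indicator {0<..<1::real} x" by (auto simp: indicator_def)
          show "(\<integral>\<^sup>+ x. ennreal (x * indicator {0<..<1} x) \<partial>Lm) < \<infinity>" using True by (simp add: X_def)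
        qed
        moreover have "X = ennreal (\<integral>x. x * indicator {0<..<1} x \<partial>Lm)"
          unfolding X_def by (rule nn_integral_eq_integral[OF iX]) (auto simp: indicator_def)
        ultimately show ?thesis using False by (simp add: ennreal_less_iff)
      qed
      then obtain n where "ennreal (- gam) < ennreal (J (Suc n))"
        unfolding XS hnJ less_SUP_iff by blast
      hence "- gam < J (Suc n)" using False by (subst (asm) ennreal_less_iff) auto
      thus ?thesis by (intro exI[of _ n]) linarith
    qed
    then obtain n where n: "gam + J (Suc n) > 0" by blast
    define D where "D = gam + J (Suc n)"
    have D: "D > 0" using n by (simp add: D_def)
    define th where "th = max (max T 0 + 1) (max (real (Suc n)) ((\<bar>M\<bar> + c + 1) / D))"
    have th1: "th \<ge> 1" "th > T" "th \<ge> real (Suc n)" by (auto simp: th_def)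
    have "J th \<ge> J (Suc n)" using th1 by (intro Jmono) auto
    hence "gam + J th \<ge> D" by (simp add: D_def)
    hence "th * (gam + J th) \<ge> th * D" using th1 by (intro mult_left_mono) auto
    moreover have "th * D \<ge> \<bar>M\<bar> + c + 1"
    proof -
      have "th \<ge> (\<bar>M\<bar> + c + 1) / D" by (simp add: th_def)
      thus ?thesis using D by (simp add: field_simps)
    qed
    moreover have "laplace_exp gam sig Lm th \<ge> gam * th + th * J th - c"
      using psi_ge[of th] th1 True by (simp add: J_def)
    moreover have "th * (gam + J th) = gam * th + th * J th" by (simp add: algebra_simps)
    ultimately have "laplace_exp gam sig Lm th > M" by linarith
    thus ?thesis using th1 by blast
  qed
qed



definition goodW :: "(real \<Rightarrow> real) \<Rightarrow> bool" where
  "goodW W \<longleftrightarrow> (\<forall>x<0. W x = 0) \<and> continuous_on {0..} W \<and> strict_mono_on {0..} W \<and> W 0 \<ge> 0"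

lemma goodW_nonneg: "goodW W \<Longrightarrow> W x \<ge> 0"
proof -
  assume g: "goodW W"
  show ?thesis
  proof (cases "x < 0")
    case True thus ?thesis using g by (simp add: goodW_def)
  next
    case False
    hence "W 0 \<le> W x" using g strict_mono_on_imp_mono_on[of "{0..}" W]
      by (auto simp: goodW_def mono_on_def)
    thus ?thesis using g by (simp add: goodW_def)
  qed
qed

lemma goodW_pos: "goodW W \<Longrightarrow> x > 0 \<Longrightarrow> W x > 0"
proof -
  assume g: "goodW W" and x: "x > 0"
  have "W 0 < W x" using g x by (auto simp: goodW_def strict_mono_on_def)
  thus ?thesis using g by (simp add: goodW_def)
qed

lemma goodW_mono: "goodW W \<Longrightarrow> 0 \<le> x \<Longrightarrow> x \<le> y \<Longrightarrow> W x \<le> W y"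
  using strict_mono_on_imp_mono_on[of "{0..}" W] by (auto simp: goodW_def mono_on_def)

lemma goodW_cont: "goodW W \<Longrightarrow> 0 \<le> a \<Longrightarrow> continuous_on {a..b} W"
  by (rule continuous_on_subset[of "{0..}"]) (auto simp: goodW_def)

lemma goodW_int: "goodW W \<Longrightarrow> 0 \<le> a \<Longrightarrow> W integrable_on {a..b}"
  by (rule integrable_continuous_interval[OF goodW_cont])

lemma int_nonneg_W: "goodW W \<Longrightarrow> 0 \<le> a \<Longrightarrow> integral {a..b} W \<ge> 0"
  by (rule integral_nonneg[OF goodW_int]) (auto simp: goodW_nonneg)

lemma Zs_le0: "x \<le> 0 \<Longrightarrow> Zs q W x = 1"
proof (cases "x = 0")
  case True thus ?thesis by (simp add: Zs_def)
next
  case False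
  assume "x \<le> 0"
  hence "{0..x} = {}" using False by auto
  thus ?thesis by (simp add: Zs_def)
qed

lemma Zs_diff: assumes "goodW W" "0 \<le> x" "x \<le> y"
  shows "Zs q W y - Zs q W x = q * integral {x..y} W"
proof -
  have "integral {0..x} W + integral {x..y} W = integral {0..y} W"
    using assms by (intro Henstock_Kurzweil_Integration.integral_combine goodW_int) auto
  hence "integral {0..y} W = integral {0..x} W + integral {x..y} W" by simp
  thus ?thesis by (simp add: Zs_def algebra_simps)
qed

lemma Zs_mono: assumes "goodW W" "q \<ge> 0" "x \<le> y" shows "Zs q W x \<le> Zs q W y"
proof (cases "x \<le> 0")
  case True
  show ?thesis
  proof (cases "y \<le> 0")
    case True thus ?thesis using \<open>x \<le> 0\<close> by (simp add: Zs_le0)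
  next
    case False
    have "Zs q W y - Zs q W 0 = q * integral {0..y} W" using assms False by (intro Zs_diff) auto
    moreover have "integral {0..y} W \<ge> 0" using assms by (intro int_nonneg_W) auto
    moreover have "q * integral {0..y} W \<ge> 0" using assms calculation by (intro mult_nonneg_nonneg) auto
    ultimately show ?thesis using True Zs_le0[of 0 q W] Zs_le0[of x q W] by linarith
  qed
next
  case False
  have "Zs q W y - Zs q W x = q * integral {x..y} W" using assms False by (intro Zs_diff) auto
  moreover have "integral {x..y} W \<ge> 0" using assms False by (intro int_nonneg_W) auto
  moreover have "q * integral {x..y} W \<ge> 0" using assms calculation by (intro mult_nonneg_nonneg) auto
  ultimately show ?thesis by linarith
qed

lemma Zs_ge1: assumes "goodW W" "q \<ge> 0" shows "Zs q W x \<ge> 1"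
  using Zs_mono[OF assms, of "min 0 x" x] by (simp add: Zs_le0)

lemma Zs_strict: assumes "goodW W" "q > 0" "x < y" "0 < y" shows "Zs q W x < Zs q W y"
proof -
  define x' where "x' = max 0 x"
  have "Zs q W x \<le> Zs q W x'" using assms by (intro Zs_mono) (auto simp: x'_def)
  also have "Zs q W x' < Zs q W y"
  proof -
    have "Zs q W y - Zs q W x' = q * integral {x'..y} W" using assms by (intro Zs_diff) (auto simp: x'_def)
    moreover have "integral {x'..y} (\<lambda>_. 0) < integral {x'..y} W"
      using assms by (intro integral_less_real goodW_cont[OF assms(1)]) (auto simp: x'_def intro: goodW_pos)
    moreover have "q * integral {x'..y} W > 0" using assms calculation by (intro mult_pos_pos) auto
    ultimately show ?thesis by simp
  qed
  finally show ?thesis .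
qed

lemma Zs_lip: assumes "goodW W" "q \<ge> 0" "0 \<le> x" "x \<le> y" "y \<le> K"
  shows "Zs q W y - Zs q W x \<le> q * W K * (y - x)"
proof -
  have "integral {x..y} W \<le> integral {x..y} (\<lambda>_. W K)"
    using assms by (intro integral_le goodW_int[OF assms(1)]) (auto intro: goodW_mono)
  also have "\<dots> = W K * (y - x)" using assms by simp
  finally show ?thesis using Zs_diff[OF assms(1,3,4), of q] assms
    by (simp add: mult_left_mono mult.assoc)
qed

lemma Zs_big: assumes "goodW W" "q \<ge> 0" "1 \<le> x"
  shows "Zs q W x \<ge> 1 + q * W 1 * (x - 1)"
proof -
  have "integral {1..x} (\<lambda>_. W 1) \<le> integral {1..x} W"
    using assms by (intro integral_le goodW_int[OF assms(1)]) (auto intro: goodW_mono)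
  hence "W 1 * (x - 1) \<le> integral {1..x} W" using assms by (simp add: mult.commute)
  hence "q * (W 1 * (x - 1)) \<le> q * integral {1..x} W" using assms by (intro mult_left_mono) auto
  moreover have "Zs q W x - Zs q W 1 = q * integral {1..x} W" using assms by (intro Zs_diff) auto
  moreover have "Zs q W 1 \<ge> 1" using assms by (intro Zs_ge1)
  ultimately show ?thesis by (simp add: mult.assoc)
qed

lemma Zs_cont: assumes "goodW W" shows "continuous_on UNIV (Zs q W)"
proof -
  have eq: "Zs q W x = 1 + q * integral {0..max 0 x} W" for x
  proof (cases "x \<le> 0")
    case True thus ?thesis by (simp add: Zs_le0 max_def)
  next
    case False thus ?thesis by (simp add: Zs_def max_def)
  qed
  have "continuous (at x) (Zs q W)" for x
  proof -
    define N where "N = \<bar>x\<bar> + 1"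
    have c1: "continuous_on {0..N} (\<lambda>y. integral {0..y} W)"
      using assms by (intro indefinite_integral_continuous_1 goodW_int) auto
    have c2: "continuous_on {-N..N} (\<lambda>x. integral {0..max 0 x} W)"
    proof (rule continuous_on_compose2[OF c1, of _ "\<lambda>x. max 0 x"])
      show "continuous_on {-N..N} (max 0)" by (intro continuous_intros)
      show "max 0 ` {-N..N} \<subseteq> {0..N}" by (auto simp: N_def)
    qed
    have "continuous_on {-N..N} (Zs q W)"
      unfolding eq by (intro continuous_intros c2)
    moreover have "x \<in> interior {-N..N}" by (auto simp: N_def)
    ultimately show ?thesis by (rule continuous_on_interior)
  qed
  thus ?thesis by (simp add: continuous_at_imp_continuous_on)
qed

lemma Zbar_diff: assumes "goodW W" "q \<ge> 0" "0 \<le> x" "x \<le> y"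
  shows "Zbar q W y - Zbar q W x = integral {x..y} (Zs q W)"
proof -
  have int: "Zs q W integrable_on {0..y}"
    using Zs_cont[OF assms(1)] by (intro integrable_continuous_interval) (auto intro: continuous_on_subset)
  have "integral {0..x} (Zs q W) + integral {x..y} (Zs q W) = integral {0..y} (Zs q W)"
    using assms by (intro Henstock_Kurzweil_Integration.integral_combine int) auto
  hence "integral {0..y} (Zs q W) = integral {0..x} (Zs q W) + integral {x..y} (Zs q W)" by simp
  thus ?thesis by (simp add: Zbar_def algebra_simps)
qed

lemma Zbar_0: "Zbar q W 0 = 0" by (simp add: Zbar_def)

lemma Zbar_inc: assumes "goodW W" "q \<ge> 0" "0 \<le> x" "x \<le> y"
  shows "Zbar q W y - Zbar q W x \<ge> y - x"
proof -
  have int: "Zs q W integrable_on {x..y}"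
    using Zs_cont[OF assms(1)] by (intro integrable_continuous_interval) (auto intro: continuous_on_subset)
  have "integral {x..y} (\<lambda>_. 1) \<le> integral {x..y} (Zs q W)"
    using assms by (intro integral_le int) (auto intro: Zs_ge1)
  thus ?thesis using Zbar_diff[OF assms] assms by simp
qed

lemma Zbar_le: assumes "goodW W" "q \<ge> 0" "0 \<le> x"
  shows "Zbar q W x \<le> x * Zs q W x"
proof -
  have int: "Zs q W integrable_on {0..x}"
    using Zs_cont[OF assms(1)] by (intro integrable_continuous_interval) (auto intro: continuous_on_subset)
  have "integral {0..x} (Zs q W) \<le> integral {0..x} (\<lambda>_. Zs q W x)"
    using assms by (intro integral_le int) (auto intro: Zs_mono)
  thus ?thesis using assms by (simp add: Zbar_def)
qed

lemma Zbar_cont: assumes "goodW W" shows "continuous_on {0..N} (Zbar q W)"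
  unfolding Zbar_def
  using Zs_cont[OF assms] by (intro indefinite_integral_continuous_1 integrable_continuous_interval)
    (auto intro: continuous_on_subset)




lemma int_reflect_shift: "integral {b-a..b} (\<lambda>y. f (b - y)) = integral {0..a} (f::real\<Rightarrow>real)"
proof -
  have "integral {-a..0} ((\<lambda>y. f (b - y)) \<circ> ((+) b)) = integral {-a+b..0+b} (\<lambda>y. f (b - y))"
    by (rule integral_shift_Icc_real)
  moreover have "((\<lambda>y. f (b - y)) \<circ> ((+) b)) = (\<lambda>x. f (- x))" by (auto simp: o_def)
  moreover have "integral {-a..-0} (\<lambda>x. f (- x)) = integral {0..a} f" by (rule Henstock_Kurzweil_Integration.integral_reflect_real)
  ultimately show ?thesis by (simp add: algebra_simps)
qed

lemma int_stretch:
  fixes f :: "real \<Rightarrow> real"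
  assumes "a > 0" "f integrable_on {0..a}"
  shows "integral {0..a} f = a * integral {0..1} (\<lambda>t. f (a * t))"
proof -
  obtain i where i: "(f has_integral i) (cbox 0 a)" using assms(2) by (auto simp: integrable_on_def)
  from has_integral_affinity'[OF i assms(1), of 0]
  have "((\<lambda>x. f (a * x)) has_integral (i / a)) (cbox 0 1)" using assms(1) by (simp add: divide_inverse mult.commute)
  hence "integral {0..1} (\<lambda>t. f (a * t)) = i / a" by (simp add: integral_unique)
  moreover have "integral {0..a} f = i" using i by (simp add: integral_unique)
  ultimately show ?thesis using assms(1) by simp
qed

locale Sx =
  fixes q \<delta> \<rho> :: real and Wy Wx :: "real \<Rightarrow> real" and dX \<beta> :: real
  assumes q: "q > 0" and d: "\<delta> > 0" and gy: "goodW Wy" and gx: "goodW Wx"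
    and b0: "0 < \<beta>" and b1: "\<beta> < 1"
begin

definition Zx where "Zx = Zs q Wx"
definition g where "g b u = Wy u * (1 - \<beta> * Zx (b - u))"
definition I where "I a b = integral {0..a} (g b)"
definition C where "C = \<delta> - q * \<rho> - \<beta> * dX"
definition G where "G a b = Gam q \<delta> \<rho> Wy Wx dX \<beta> a b"

lemma Zx_cont: "continuous_on UNIV Zx"
  unfolding Zx_def by (rule Zs_cont[OF gx])

lemma Zx_cont'[continuous_intros]: "continuous_on S f \<Longrightarrow> continuous_on S (\<lambda>x. Zx (f x))"
  by (rule continuous_on_compose2[OF Zx_cont]) auto

lemma g_cont: "continuous_on {0..a} (g b)"
  unfolding g_def by (intro continuous_intros goodW_cont[OF gy]) auto

lemma g_int: "g b integrable_on {0..a}"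
  by (rule integrable_continuous_interval[OF g_cont])

lemma Gam_eq:
  assumes "0 \<le> a" "a \<le> b"
  shows "G a b = C - q * \<beta> * Zbar q Wx b + \<delta> * q * I a b"
proof -
  have K: "integral {b-a..b} (\<lambda>y. Wy (b - y) * Zs q Wx y) = integral {0..a} (\<lambda>u. Wy u * Zx (b - u))"
    using int_reflect_shift[of b a "\<lambda>u. Wy u * Zx (b - u)"] by (simp add: Zx_def)
  have i1: "Wy integrable_on {0..a}" by (rule goodW_int[OF gy]) simp
  have i2: "(\<lambda>u. Wy u * Zx (b - u)) integrable_on {0..a}"
    by (intro integrable_continuous_interval continuous_intros goodW_cont[OF gy]) auto
  have Ieq: "I a b = integral {0..a} Wy - \<beta> * integral {0..a} (\<lambda>u. Wy u * Zx (b - u))"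
  proof -
    have "I a b = integral {0..a} (\<lambda>u. Wy u - \<beta> * (Wy u * Zx (b - u)))"
      unfolding I_def g_def by (simp add: algebra_simps)
    also have "\<dots> = integral {0..a} Wy - integral {0..a} (\<lambda>u. \<beta> * (Wy u * Zx (b - u)))"
      by (rule integral_diff[OF i1]) (rule integrable_on_mult_right[OF i2])
    also have "integral {0..a} (\<lambda>u. \<beta> * (Wy u * Zx (b - u))) = \<beta> * integral {0..a} (\<lambda>u. Wy u * Zx (b - u))"
      by (rule integral_mult_right)
    finally show ?thesis .
  qed
  show ?thesis
    unfolding G_def Gam_def rtil_def Rq_def K Ieq Zs_def[of q Wy] C_def
    using q by (simp add: algebra_simps)
qed

lemma z_ex: "\<exists>!z. z \<ge> 0 \<and> Zx z = 1 / \<beta>"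
proof -
  have W1: "Wx 1 > 0" by (rule goodW_pos[OF gx]) simp
  define N where "N = max 1 (1 + (1 / \<beta> - 1) / (q * Wx 1))"
  have N1: "N \<ge> 1" by (simp add: N_def)
  have "Zx N \<ge> 1 + q * Wx 1 * (N - 1)" unfolding Zx_def using q N1 by (intro Zs_big[OF gx]) auto
  moreover have "q * Wx 1 * (N - 1) \<ge> 1 / \<beta> - 1"
  proof -
    have "N - 1 \<ge> (1 / \<beta> - 1) / (q * Wx 1)" by (simp add: N_def)
    hence "q * Wx 1 * (N - 1) \<ge> q * Wx 1 * ((1 / \<beta> - 1) / (q * Wx 1))"
      using q W1 by (intro mult_left_mono) auto
    thus ?thesis using q W1 by simp
  qed
  ultimately have ZN: "Zx N \<ge> 1 / \<beta>" by linarith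
  have Z0: "Zx 0 \<le> 1 / \<beta>" using b0 b1 by (simp add: Zx_def Zs_le0 field_simps)
  obtain z where z: "0 \<le> z" "z \<le> N" "Zx z = 1 / \<beta>"
    using IVT'[of Zx 0 "1/\<beta>" N, OF Z0 ZN] N1 continuous_on_subset[OF Zx_cont] by auto
  moreover have "w = z" if "w \<ge> 0" "Zx w = 1 / \<beta>" for w
  proof (rule ccontr)
    assume "w \<noteq> z"
    hence "w < z \<or> z < w" by auto
    thus False
    proof
      assume "w < z" hence "Zx w < Zx z" unfolding Zx_def using z that q by (intro Zs_strict[OF gx]) auto
      thus False using z that by simp
    next
      assume "z < w" hence "Zx z < Zx w" unfolding Zx_def using z that q by (intro Zs_strict[OF gx]) auto
      thus False using z that by simp
    qed
  qed
  ultimately show ?thesis by blast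
qed

definition z where "z = (THE z. z \<ge> 0 \<and> Zx z = 1 / \<beta>)"

lemma z_prop: "z \<ge> 0" "Zx z = 1 / \<beta>"
  using theI'[OF z_ex] by (auto simp: z_def)

lemma z_pos: "z > 0"
proof -
  have "Zx 0 = 1" by (simp add: Zx_def Zs_le0)
  moreover have "1 / \<beta> \<noteq> 1" using b0 b1 by (simp add: field_simps)
  ultimately have "z \<noteq> 0" using z_prop by auto
  thus ?thesis using z_prop by simp
qed

lemma Zx_mono: "x \<le> y \<Longrightarrow> Zx x \<le> Zx y"
  unfolding Zx_def using q by (intro Zs_mono[OF gx]) auto

lemma Zx_strict: "x < y \<Longrightarrow> 0 < y \<Longrightarrow> Zx x < Zx y"
  unfolding Zx_def using q by (intro Zs_strict[OF gx]) auto

lemma g_neg: assumes "0 < u" "u < b - z" shows "g b u < 0"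
proof -
  have "Zx z < Zx (b - u)" using assms z_prop by (intro Zx_strict) auto
  hence "1 / \<beta> < Zx (b - u)" using z_prop by simp
  hence "1 < \<beta> * Zx (b - u)" using b0 by (simp add: field_simps)
  moreover have "Wy u > 0" using assms by (intro goodW_pos[OF gy])
  ultimately show ?thesis unfolding g_def by (simp add: mult_pos_neg)
qed

lemma g_pos: assumes "0 < u" "b - z < u" shows "g b u > 0"
proof -
  have "Zx (b - u) < Zx z" using assms z_pos by (intro Zx_strict) auto
  hence "Zx (b - u) < 1 / \<beta>" using z_prop by simp
  hence "\<beta> * Zx (b - u) < 1" using b0 by (simp add: field_simps)
  moreover have "Wy u > 0" using assms by (intro goodW_pos[OF gy])
  ultimately show ?thesis unfolding g_def by simp
qed

lemma I_comb: "0 \<le> x \<Longrightarrow> x \<le> y \<Longrightarrow> I y b = I x b + integral {x..y} (g b)"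
  unfolding I_def
  by (metis Henstock_Kurzweil_Integration.integral_combine g_int)

definition ab where "ab b = max 0 (b - z)"

lemma I_min: assumes "0 \<le> a" "a \<le> b" "a \<noteq> ab b" shows "I (ab b) b < I a b"
proof (cases "a < ab b")
  case True
  hence abz: "ab b = b - z" using assms by (auto simp: ab_def)
  have "integral {a..ab b} (g b) < integral {a..ab b} (\<lambda>_. 0)"
  proof (rule integral_less_real)
    show "continuous_on {a..ab b} (g b)" by (rule continuous_on_subset[OF g_cont]) (use assms in auto)
    show "{a<..<ab b} \<noteq> {}" using True by auto
    show "g b u < 0" if "u \<in> {a<..<ab b}" for u using that assms abz by (intro g_neg) auto
  qed auto
  moreover have "I (ab b) b = I a b + integral {a..ab b} (g b)" using True assms by (intro I_comb) auto
  ultimately show ?thesis by simp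
next
  case False
  hence lt: "ab b < a" using assms by simp
  have "integral {ab b..a} (\<lambda>_. 0) < integral {ab b..a} (g b)"
  proof (rule integral_less_real)
    show "continuous_on {ab b..a} (g b)" by (rule continuous_on_subset[OF g_cont]) (auto simp: ab_def)
    show "{ab b<..<a} \<noteq> {}" using lt by auto
    show "0 < g b u" if "u \<in> {ab b<..<a}" for u using that by (intro g_pos) (auto simp: ab_def)
  qed auto
  moreover have "I a b = I (ab b) b + integral {ab b..a} (g b)" using lt by (intro I_comb) (auto simp: ab_def)
  ultimately show ?thesis by simp
qed

lemma ab_in: "0 \<le> b \<Longrightarrow> ab b \<in> {0..b}"
  using z_pos by (auto simp: ab_def)

lemma G_min: assumes "0 \<le> a" "a \<le> b" "a \<noteq> ab b" shows "G (ab b) b < G a b"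
proof -
  have "0 \<le> ab b" "ab b \<le> b" using ab_in assms by auto
  hence "G (ab b) b = C - q * \<beta> * Zbar q Wx b + \<delta> * q * I (ab b) b" by (intro Gam_eq)
  moreover have "G a b = C - q * \<beta> * Zbar q Wx b + \<delta> * q * I a b" using assms by (intro Gam_eq)
  moreover have "\<delta> * q * I (ab b) b < \<delta> * q * I a b" using I_min[OF assms] d q by simp
  ultimately show ?thesis by simp
qed

definition m where "m b = G (ab b) b"

lemma minGam_eq: "0 \<le> b \<Longrightarrow> minGam q \<delta> \<rho> Wy Wx dX \<beta> b = m b"
  unfolding minGam_def m_def G_def[symmetric]
proof (rule cInf_eq_minimum)
  assume b: "0 \<le> b"
  show "G (ab b) b \<in> (\<lambda>a. G a b) ` {0..b}" using ab_in[OF b] by blast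
  show "G (ab b) b \<le> y" if "y \<in> (\<lambda>a. G a b) ` {0..b}" for y
    using that G_min by (cases "y = G (ab b) b") (auto, metis less_eq_real_def)
qed

lemma m_eq: "0 \<le> b \<Longrightarrow> m b = C - q * \<beta> * Zbar q Wx b + \<delta> * q * I (ab b) b"
  unfolding m_def using ab_in by (intro Gam_eq) auto

lemma m_dec: assumes "0 \<le> b1" "b1 < b2" shows "m b2 < m b1"
proof -
  define a1 where "a1 = ab b1"
  have a1: "0 \<le> a1" "a1 \<le> b1" using ab_in[OF assms(1)] by (auto simp: a1_def)
  have "m b2 \<le> G a1 b2"
    unfolding m_def using G_min[of a1 b2] a1 assms by (cases "a1 = ab b2") (auto simp: less_eq_real_def)
  also have "G a1 b2 < G a1 b1"
  proof -
    have e2: "G a1 b2 = C - q * \<beta> * Zbar q Wx b2 + \<delta> * q * I a1 b2" using a1 assms by (intro Gam_eq) auto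
    have e1: "G a1 b1 = C - q * \<beta> * Zbar q Wx b1 + \<delta> * q * I a1 b1" using a1 assms by (intro Gam_eq) auto
    have "Zbar q Wx b2 - Zbar q Wx b1 \<ge> b2 - b1" using assms q by (intro Zbar_inc[OF gx]) auto
    hence "q * \<beta> * Zbar q Wx b1 < q * \<beta> * Zbar q Wx b2" using assms q b0 by simp
    moreover have "I a1 b2 \<le> I a1 b1"
      unfolding I_def
    proof (rule integral_le[OF g_int g_int])
      fix u assume "u \<in> {0..a1}"
      have "Zx (b1 - u) \<le> Zx (b2 - u)" using assms by (intro Zx_mono) auto
      hence "1 - \<beta> * Zx (b2 - u) \<le> 1 - \<beta> * Zx (b1 - u)" using b0 by simp
      moreover have "Wy u \<ge> 0" by (rule goodW_nonneg[OF gy])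
      ultimately show "g b2 u \<le> g b1 u" unfolding g_def by (rule mult_left_mono)
    qed
    hence "\<delta> * q * I a1 b2 \<le> \<delta> * q * I a1 b1" using d q by simp
    ultimately show ?thesis using e1 e2 by linarith
  qed
  also have "G a1 b1 = m b1" by (simp add: m_def a1_def)
  finally show ?thesis .
qed

lemma Wyc_cont: "continuous_on UNIV (\<lambda>u. Wy (max 0 u))"
  by (rule continuous_on_compose2[of "{0..}" Wy]) (use gy in \<open>auto simp: goodW_def intro!: continuous_intros\<close>)

lemma Wyc_cont'[continuous_intros]: "continuous_on S f \<Longrightarrow> continuous_on S (\<lambda>x. Wy (max 0 (f x)))"
  by (rule continuous_on_compose2[OF Wyc_cont]) auto

definition gc where "gc b u = Wy (max 0 u) * (1 - \<beta> * Zx (b - u))"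

lemma I_stretch: "0 \<le> b \<Longrightarrow> I (ab b) b = ab b * integral {0..1} (\<lambda>t. gc b (ab b * t))"
proof (cases "ab b = 0")
  case True thus ?thesis by (simp add: I_def)
next
  case False
  hence pos: "ab b > 0" by (simp add: ab_def)
  have "I (ab b) b = ab b * integral {0..1} (\<lambda>t. g b (ab b * t))"
    unfolding I_def by (rule int_stretch[OF pos g_int])
  also have "integral {0..1} (\<lambda>t. g b (ab b * t)) = integral {0..1} (\<lambda>t. gc b (ab b * t))"
    by (rule integral_cong) (use pos in \<open>auto simp: g_def gc_def\<close>)
  finally show ?thesis .
qed

lemma m_cont: "continuous_on {0..N} m"
proof -
  have cp: "continuous_on (UNIV \<times> cbox 0 1) (\<lambda>(b, t). gc b (ab b * t))"
  proof -
    have "continuous_on (UNIV \<times> cbox 0 1) (\<lambda>p. gc (fst p) (ab (fst p) * snd p))"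
      unfolding gc_def ab_def by (intro continuous_intros)
    thus ?thesis by (simp add: split_beta)
  qed
  have cPhi: "continuous_on UNIV (\<lambda>b. integral (cbox 0 1) (\<lambda>t. gc b (ab b * t)))"
    by (rule integral_continuous_on_param[OF cp])
  have "continuous_on {0..N} (\<lambda>b. C - q * \<beta> * Zbar q Wx b + \<delta> * q * (ab b * integral {0..1} (\<lambda>t. gc b (ab b * t))))"
    using cPhi unfolding ab_def
    by (intro continuous_intros Zbar_cont[OF gx]) (auto intro: continuous_on_subset)
  moreover have "C - q * \<beta> * Zbar q Wx b + \<delta> * q * (ab b * integral {0..1} (\<lambda>t. gc b (ab b * t))) = m b"
    if "b \<in> {0..N}" for b using that by (simp add: m_eq I_stretch)
  ultimately show ?thesis by (rule continuous_on_eq)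
qed

lemma I0: "I 0 b = 0" by (simp add: I_def)

lemma G00: "Gam q \<delta> \<rho> Wy Wx dX \<beta> 0 0 = C"
  using Gam_eq[of 0 0] by (simp add: G_def I0 Zbar_0)

lemma G0b: "0 \<le> b \<Longrightarrow> G 0 b = C - q * \<beta> * Zbar q Wx b"
  using Gam_eq[of 0 b] by (simp add: I0)

lemma m_le: assumes "0 \<le> b" shows "m b \<le> C - q * \<beta> * b"
proof -
  have "m b \<le> G 0 b"
    unfolding m_def using G_min[of 0 b] assms by (cases "0 = ab b") (auto simp: less_eq_real_def)
  also have "\<dots> = C - q * \<beta> * Zbar q Wx b" using assms by (rule G0b)
  also have "\<dots> \<le> C - q * \<beta> * b"
  proof -
    have "Zbar q Wx b - Zbar q Wx 0 \<ge> b - 0" using assms q by (intro Zbar_inc[OF gx]) auto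
    hence "Zbar q Wx b \<ge> b" by (simp add: Zbar_0)
    thus ?thesis using q b0 by simp
  qed
  finally show ?thesis .
qed

lemma m0: "m 0 = C"
proof -
  have "ab 0 = 0" using z_pos by (simp add: ab_def)
  thus ?thesis using G00 by (simp add: m_def G_def)
qed

lemma root_ex: assumes "C > 0" shows "\<exists>r>0. m r = 0"
proof -
  define N where "N = C / (q * \<beta>) + 1"
  have N: "N \<ge> 0" using assms q b0 by (simp add: N_def)
  have "m N \<le> C - q * \<beta> * N" by (rule m_le[OF N])
  also have "\<dots> = - q * \<beta>" using q b0 by (simp add: N_def field_simps)
  finally have mN: "m N \<le> 0" using mult_pos_pos[OF q b0] by linarith
  obtain r where r: "0 \<le> r" "r \<le> N" "m r = 0"
    using IVT2'[of m N 0 0, OF mN] m0 assms N m_cont[of N] by auto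
  have "r \<noteq> 0" using r m0 assms by auto
  thus ?thesis using r by (intro exI[of _ r]) auto
qed

lemma m_inj: "0 \<le> x \<Longrightarrow> 0 \<le> y \<Longrightarrow> m x = m y \<Longrightarrow> x = y"
proof (rule ccontr)
  assume x: "0 \<le> x" and y: "0 \<le> y" and e: "m x = m y" and ne: "x \<noteq> y"
  hence "x < y \<or> y < x" by auto
  thus False
  proof
    assume "x < y" thus False using m_dec[OF x \<open>x < y\<close>] e by simp
  next
    assume "y < x" thus False using m_dec[OF y \<open>y < x\<close>] e by simp
  qed
qed

definition B where "B = bstar q \<delta> \<rho> Wy Wx dX \<beta>"
definition A where "A = astar q \<delta> \<rho> Wy Wx dX \<beta>"

lemma nonpos_case: "C \<le> 0 \<Longrightarrow> A = 0 \<and> B = 0"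
  by (simp add: A_def B_def astar_def bstar_def G00)

lemma B_prop: assumes "C > 0" shows "B > 0" "m B = 0"
proof -
  obtain r where r: "r > 0" "m r = 0" using root_ex[OF assms] by blast
  have "(THE b. 0 < b \<and> minGam q \<delta> \<rho> Wy Wx dX \<beta> b = 0) = r"
  proof (rule the_equality)
    show "0 < r \<and> minGam q \<delta> \<rho> Wy Wx dX \<beta> r = 0" using r minGam_eq[of r] by simp
    show "b = r" if "0 < b \<and> minGam q \<delta> \<rho> Wy Wx dX \<beta> b = 0" for b
      using that r minGam_eq[of b] m_inj[of b r] by auto
  qed
  hence "B = r" using assms by (simp add: B_def bstar_def G00)
  thus "B > 0" "m B = 0" using r by auto
qed

lemma B_le: assumes "C > 0" shows "B \<le> C / (q * \<beta>)"
proof -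
  have "0 \<le> C - q * \<beta> * B" using m_le[of B] B_prop[OF assms] by simp
  thus ?thesis using q b0 by (simp add: field_simps)
qed

lemma A_eq: assumes "C > 0" shows "A = ab B"
proof -
  have Bp: "B \<ge> 0" using B_prop[OF assms] by simp
  have "(THE a. a \<in> {0..B} \<and> (\<forall>a'\<in>{0..B}. Gam q \<delta> \<rho> Wy Wx dX \<beta> a B \<le> Gam q \<delta> \<rho> Wy Wx dX \<beta> a' B)) = ab B"
  proof (rule the_equality)
    have "G (ab B) B \<le> G a' B" if "a' \<in> {0..B}" for a'
    proof (cases "a' = ab B")
      case False thus ?thesis using G_min[of a' B] that by auto
    qed simp
    thus "ab B \<in> {0..B} \<and> (\<forall>a'\<in>{0..B}. Gam q \<delta> \<rho> Wy Wx dX \<beta> (ab B) B \<le> Gam q \<delta> \<rho> Wy Wx dX \<beta> a' B)"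
      using ab_in[OF Bp] unfolding G_def by blast
    show "a = ab B" if "a \<in> {0..B} \<and> (\<forall>a'\<in>{0..B}. Gam q \<delta> \<rho> Wy Wx dX \<beta> a B \<le> Gam q \<delta> \<rho> Wy Wx dX \<beta> a' B)" for a
    proof (rule ccontr)
      assume "a \<noteq> ab B"
      hence "G (ab B) B < G a B" using that by (intro G_min) auto
      moreover have "G a B \<le> G (ab B) B" using that ab_in[OF Bp] unfolding G_def by auto
      ultimately show False by simp
    qed
  qed
  thus ?thesis using assms by (simp add: A_def astar_def B_def[symmetric] G00 Let_def)
qed

lemma mz: "m z = C - q * \<beta> * Zbar q Wx z"
  using G0b[of z] z_prop by (simp add: m_def ab_def)

lemma big_case: assumes "C > 0" "m z > 0" shows "z < B" "A = B - z" "0 < A" "A < B"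
proof -
  show zB: "z < B"
  proof (rule ccontr)
    assume "\<not> z < B"
    hence "B \<le> z" by simp
    hence "m z \<le> m B" using m_dec[of B z] B_prop[OF assms(1)] by (cases "B = z") auto
    thus False using assms B_prop[OF assms(1)] by simp
  qed
  show "A = B - z" using A_eq[OF assms(1)] zB by (simp add: ab_def)
  thus "0 < A" "A < B" using zB z_pos by auto
qed

lemma z_small: assumes "e > 0" "1 / \<beta> < Zs q Wx e" shows "z < e"
proof (rule ccontr)
  assume "\<not> z < e"
  hence "Zx e \<le> Zx z" by (intro Zx_mono) simp
  thus False using assms z_prop by (simp add: Zx_def)
qed

lemma case1:
  assumes "e > 0" "1 / \<beta> < Zs q Wx e" "\<delta> - q * \<rho> - \<beta> * dX > q * e"
  shows "0 < astar q \<delta> \<rho> Wy Wx dX \<beta> \<and> astar q \<delta> \<rho> Wy Wx dX \<beta> < bstar q \<delta> \<rho> Wy Wx dX \<beta>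
    \<and> Zs q Wx (bstar q \<delta> \<rho> Wy Wx dX \<beta> - astar q \<delta> \<rho> Wy Wx dX \<beta>) = 1 / \<beta>
    \<and> bstar q \<delta> \<rho> Wy Wx dX \<beta> - astar q \<delta> \<rho> Wy Wx dX \<beta> < e"
proof -
  have ze: "z < e" using z_small[OF assms(1,2)] .
  have Cg: "C > q * e" using assms(3) by (simp add: C_def)
  have C0: "C > 0" using Cg mult_pos_pos[OF q assms(1)] by linarith
  have "Zbar q Wx z \<le> z * Zs q Wx z" using z_prop q by (intro Zbar_le[OF gx]) auto
  hence "q * \<beta> * Zbar q Wx z \<le> q * \<beta> * (z * Zs q Wx z)" using q b0 by (intro mult_left_mono) auto
  also have "\<dots> = q * z" using z_prop b0 by (simp add: Zx_def)
  also have "\<dots> < q * e" using ze q by simp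
  finally have "m z > 0" using mz Cg by linarith
  note bc = big_case[OF C0 this]
  show ?thesis using bc z_prop ze by (simp add: A_def B_def Zx_def)
qed

lemma case3:
  assumes "\<delta> - q * \<rho> - \<beta> * dX > 0"
  shows "0 < bstar q \<delta> \<rho> Wy Wx dX \<beta> \<and> bstar q \<delta> \<rho> Wy Wx dX \<beta> \<le> (\<delta> - q * \<rho> - \<beta> * dX) / (q * \<beta>)
    \<and> 0 \<le> astar q \<delta> \<rho> Wy Wx dX \<beta> \<and> astar q \<delta> \<rho> Wy Wx dX \<beta> \<le> bstar q \<delta> \<rho> Wy Wx dX \<beta>"
proof -
  have C: "C > 0" using assms by (simp add: C_def)
  show ?thesis using B_prop[OF C] B_le[OF C] A_eq[OF C] ab_in[of B] by (auto simp: A_def B_def C_def)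
qed

lemma case_nonpos:
  assumes "\<delta> - q * \<rho> - \<beta> * dX \<le> 0" shows "astar q \<delta> \<rho> Wy Wx dX \<beta> = 0 \<and> bstar q \<delta> \<rho> Wy Wx dX \<beta> = 0"
proof -
  have C: "C \<le> 0" using assms by (simp add: C_def)
  show ?thesis using nonpos_case[OF C] by (simp add: A_def B_def)
qed

end



lemma Sx_I: "q > 0 \<Longrightarrow> \<delta> > 0 \<Longrightarrow> goodW Wy \<Longrightarrow> goodW Wx \<Longrightarrow> 0 < \<beta> \<Longrightarrow> \<beta> < 1 \<Longrightarrow> Sx q \<delta> Wy Wx \<beta>"
  by (rule Sx.intro)

theorem mainTheorem11:
  fixes gam sig :: real and Lm :: "real measure"
    and q \<delta> \<rho> :: real and Wy Wx :: "real \<Rightarrow> real"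
  defines "psiY \<equiv> laplace_exp gam sig Lm"
  defines "dY \<equiv> rderiv0 psiY"
  defines "dX \<equiv> dY + \<delta>"
  defines "A \<equiv> astar q \<delta> \<rho> Wy Wx dX"
  defines "B \<equiv> bstar q \<delta> \<rho> Wy Wx dX"
  assumes triple: "spos_levy_triple gam sig Lm"
    and not_sub: "\<not> spos_is_subordinator gam sig Lm"
    and mean: "spos_finite_mean Lm"
    and q: "q > 0" and \<delta>: "\<delta> > 0"
    and Wy: "is_scale_fun psiY q Wy"
    and Wx: "is_scale_fun (\<lambda>th. psiY th + \<delta> * th) q Wx"
  shows
    "(dY + q * \<rho> < 0 \<longrightarrow>
        (\<forall>\<^sub>F \<beta> in at_left 1. 0 < A \<beta> \<and> A \<beta> < B \<beta> \<and> Zs q Wx (B \<beta> - A \<beta>) = 1 / \<beta>) \<and>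
        ((\<lambda>\<beta>. B \<beta> - A \<beta>) \<longlongrightarrow> 0) (at_left 1))
   \<and> (dY + q * \<rho> > 0 \<longrightarrow> (\<forall>\<^sub>F \<beta> in at_left 1. A \<beta> = 0 \<and> B \<beta> = 0))
   \<and> (dY + q * \<rho> = 0 \<and> dX > 0 \<longrightarrow>
        (\<forall>\<beta>\<in>{0<..<1}. B \<beta> > 0) \<and> (A \<longlongrightarrow> 0) (at_left 1) \<and> (B \<longlongrightarrow> 0) (at_left 1))
   \<and> (dY + q * \<rho> = 0 \<and> dX \<le> 0 \<longrightarrow> (\<forall>\<beta>\<in>{0<..<1}. A \<beta> = 0 \<and> B \<beta> = 0))"
proof -
  have unbY: "\<exists>th>T. psiY th > M" for T M
    unfolding psiY_def by (rule psi_unbounded[OF triple not_sub])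
  have gy: "goodW Wy"
  proof -
    obtain th0 where lap: "\<forall>th>th0. ((\<lambda>x. exp (- th * x) * Wy x) has_integral 1 / (psiY th - q)) {0..}"
      using Wy by (auto simp: is_scale_fun_def)
    have "Wy 0 \<ge> 0"
      by (rule W0_nonneg[OF _ _ lap unbY]) (use Wy in \<open>auto simp: is_scale_fun_def intro: strict_mono_on_imp_mono_on\<close>)
    thus ?thesis using Wy by (simp add: goodW_def is_scale_fun_def)
  qed
  have gx: "goodW Wx"
  proof -
    obtain th0 where lap: "\<forall>th>th0. ((\<lambda>x. exp (- th * x) * Wx x) has_integral 1 / ((\<lambda>th. psiY th + \<delta> * th) th - q)) {0..}"
      using Wx by (auto simp: is_scale_fun_def)
    have unb: "\<exists>th>T. (\<lambda>th. psiY th + \<delta> * th) th > q" for T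
    proof -
      obtain th where th: "th > max T 0" "psiY th > q" using unbY by blast
      have "\<delta> * th \<ge> 0" using th \<delta> by simp
      thus ?thesis using th by (intro exI[of _ th]) auto
    qed
    have "Wx 0 \<ge> 0"
      by (rule W0_nonneg[OF _ _ lap unb]) (use Wx in \<open>auto simp: is_scale_fun_def intro: strict_mono_on_imp_mono_on\<close>)
    thus ?thesis using Wx by (simp add: goodW_def is_scale_fun_def)
  qed
  have SI: "Sx q \<delta> Wy Wx \<beta>" if "0 < \<beta>" "\<beta> < 1" for \<beta>
    using q \<delta> gy gx that by (rule Sx_I)
  define s where "s = dY + q * \<rho>"
  have Ceq: "\<delta> - q * \<rho> - \<beta> * dX = (1 - \<beta>) * dX - s" for \<beta>
    by (simp add: dX_def s_def algebra_simps)
  have P1: "(\<forall>\<^sub>F \<beta> in at_left 1. 0 < A \<beta> \<and> A \<beta> < B \<beta> \<and> Zs q Wx (B \<beta> - A \<beta>) = 1 / \<beta>) \<and>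
        ((\<lambda>\<beta>. B \<beta> - A \<beta>) \<longlongrightarrow> 0) (at_left 1)" if sneg: "s < 0"
  proof -
    define e0 where "e0 = - s / (3 * q)"
    have e0: "e0 > 0" unfolding e0_def using sneg q by (intro divide_pos_pos) auto
    have key: "\<forall>\<^sub>F \<beta> in at_left 1. 0 < A \<beta> \<and> A \<beta> < B \<beta> \<and> Zs q Wx (B \<beta> - A \<beta>) = 1 / \<beta> \<and> B \<beta> - A \<beta> < e"
      if e: "0 < e" "e \<le> e0" for e
    proof -
      define Z1 where "Z1 = Zs q Wx e"
      have Z1: "Z1 > 1" using Zs_strict[OF gx q, of 0 e] e by (simp add: Z1_def Zs_le0)
      define K where "K = - s / (3 * (\<bar>dX\<bar> + 1))"
      have K: "K > 0" unfolding K_def using sneg by (intro divide_pos_pos) auto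
      define b1 where "b1 = max (1 / Z1) (1 - K)"
      have z1: "1 / Z1 < 1" "0 < 1 / Z1" using Z1 by auto
      have k1: "1 - K < 1" using K by simp
      have b1: "b1 < 1" "0 < b1" unfolding b1_def
        using z1 k1 by (simp_all only: max_less_iff_conj less_max_iff_disj) auto
      have "\<forall>\<^sub>F \<beta> in at_left 1. \<beta> \<in> {b1<..<1}" by (rule eventually_at_left_real[OF b1(1)])
      thus ?thesis
      proof eventually_elim
        case (elim \<beta>)
        have bb: "0 < \<beta>" "\<beta> < 1" "1 / Z1 < \<beta>" "1 - K < \<beta>" using elim b1 by (auto simp: b1_def)
        have i1: "1 / \<beta> < Zs q Wx e"
        proof -
          have "1 < Z1 * \<beta>" using bb Z1 by (simp add: field_simps)
          thus ?thesis using bb by (simp add: Z1_def field_simps)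
        qed
        have i2: "\<delta> - q * \<rho> - \<beta> * dX > q * e"
        proof -
          have "(1 - \<beta>) * (\<bar>dX\<bar> + 1) < K * (\<bar>dX\<bar> + 1)" using bb by (intro mult_strict_right_mono) auto
          also have "K * (\<bar>dX\<bar> + 1) = - s / 3"
          proof -
            have "\<bar>dX\<bar> + 1 > 0" by simp
            thus ?thesis unfolding K_def by (simp add: field_simps)
          qed
          finally have a: "(1 - \<beta>) * (\<bar>dX\<bar> + 1) < - s / 3" .
          have "(1 - \<beta>) * dX \<ge> - ((1 - \<beta>) * (\<bar>dX\<bar> + 1))"
          proof -
            have "(1 - \<beta>) * (- dX) \<le> (1 - \<beta>) * (\<bar>dX\<bar> + 1)" using bb by (intro mult_left_mono) auto
            thus ?thesis by (simp add: algebra_simps)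
          qed
          moreover have "q * e \<le> q * e0" using e q by simp
          moreover have "q * e0 = - s / 3" using q by (simp add: e0_def)
          ultimately show ?thesis using a Ceq[of \<beta>] sneg by linarith
        qed
        show ?case using Sx.case1[OF SI[OF bb(1,2)] e(1) i1 i2] by (simp add: A_def B_def)
      qed
    qed
    show ?thesis
    proof
      show "\<forall>\<^sub>F \<beta> in at_left 1. 0 < A \<beta> \<and> A \<beta> < B \<beta> \<and> Zs q Wx (B \<beta> - A \<beta>) = 1 / \<beta>"
        using key[OF e0 order_refl] by eventually_elim auto
      show "((\<lambda>\<beta>. B \<beta> - A \<beta>) \<longlongrightarrow> 0) (at_left 1)"
      proof (rule tendstoI)
        fix \<epsilon> :: real assume \<epsilon>: "\<epsilon> > 0"
        have "0 < min e0 \<epsilon>" "min e0 \<epsilon> \<le> e0" using e0 \<epsilon> by auto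
        from key[OF this] show "\<forall>\<^sub>F \<beta> in at_left 1. dist (B \<beta> - A \<beta>) 0 < \<epsilon>"
          by eventually_elim (auto simp: dist_real_def)
      qed
    qed
  qed
  have P2: "\<forall>\<^sub>F \<beta> in at_left 1. A \<beta> = 0 \<and> B \<beta> = 0" if spos: "s > 0"
  proof -
    define K where "K = s / (\<bar>dX\<bar> + 1)"
    have K: "K > 0" unfolding K_def using spos by (intro divide_pos_pos) auto
    define b1 where "b1 = max 0 (1 - K)"
    have b1: "b1 < 1" using K by (auto simp: b1_def)
    have "\<forall>\<^sub>F \<beta> in at_left 1. \<beta> \<in> {b1<..<1}" by (rule eventually_at_left_real[OF b1])
    thus ?thesis
    proof eventually_elim
      case (elim \<beta>)
      have bb: "0 < \<beta>" "\<beta> < 1" "1 - K < \<beta>" using elim by (auto simp: b1_def)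
      have "(1 - \<beta>) * (\<bar>dX\<bar> + 1) < K * (\<bar>dX\<bar> + 1)" using bb by (intro mult_strict_right_mono) auto
      also have "K * (\<bar>dX\<bar> + 1) = s" by (simp add: K_def)
      finally have a: "(1 - \<beta>) * (\<bar>dX\<bar> + 1) < s" .
      have "(1 - \<beta>) * dX \<le> (1 - \<beta>) * (\<bar>dX\<bar> + 1)" using bb by (intro mult_left_mono) auto
      hence "\<delta> - q * \<rho> - \<beta> * dX \<le> 0" using a Ceq[of \<beta>] by linarith
      thus ?case using Sx.case_nonpos[OF SI[OF bb(1,2)]] by (simp add: A_def B_def)
    qed
  qed
  have P3: "(\<forall>\<beta>\<in>{0<..<1}. B \<beta> > 0) \<and> (A \<longlongrightarrow> 0) (at_left 1) \<and> (B \<longlongrightarrow> 0) (at_left 1)"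
    if s0: "s = 0" and dpos: "dX > 0"
  proof -
    have c3: "0 < B \<beta> \<and> B \<beta> \<le> (1 - \<beta>) * dX / (q * \<beta>) \<and> 0 \<le> A \<beta> \<and> A \<beta> \<le> B \<beta>"
      if bb: "0 < \<beta>" "\<beta> < 1" for \<beta>
    proof -
      have "\<delta> - q * \<rho> - \<beta> * dX = (1 - \<beta>) * dX" using Ceq[of \<beta>] s0 by simp
      moreover have "(1 - \<beta>) * dX > 0" using bb dpos by simp
      ultimately show ?thesis using Sx.case3[OF SI[OF bb], of \<rho> dX] by (simp add: A_def B_def)
    qed
    have ev: "\<forall>\<^sub>F \<beta> in at_left 1. 0 \<le> A \<beta> \<and> A \<beta> \<le> B \<beta> \<and> B \<beta> < \<epsilon>" if \<epsilon>: "\<epsilon> > 0" for \<epsilon>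
    proof -
      define K where "K = \<epsilon> * q / (2 * dX + 1)"
      have K: "K > 0" unfolding K_def using \<epsilon> q dpos by (intro divide_pos_pos) auto
      define b1 where "b1 = max (1/2) (1 - K)"
      have b1: "b1 < 1" using K by (auto simp: b1_def)
      have "\<forall>\<^sub>F \<beta> in at_left 1. \<beta> \<in> {b1<..<1}" by (rule eventually_at_left_real[OF b1])
      thus ?thesis
      proof eventually_elim
        case (elim \<beta>)
        have bb: "0 < \<beta>" "\<beta> < 1" "1/2 < \<beta>" "1 - K < \<beta>" using elim by (auto simp: b1_def)
        note c = c3[OF bb(1,2)]
        have "(1 - \<beta>) * dX / (q * \<beta>) \<le> 2 * (1 - \<beta>) * dX / q"
        proof -
          have "(1 - \<beta>) * dX \<ge> 0" using bb dpos by simp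
          moreover have "q * (1/2) \<le> q * \<beta>" using bb q by simp
          ultimately have "(1 - \<beta>) * dX / (q * \<beta>) \<le> (1 - \<beta>) * dX / (q * (1/2))"
            using q by (intro divide_left_mono) auto
          also have "(1 - \<beta>) * dX / (q * (1/2)) = 2 * (1 - \<beta>) * dX / q" by (simp add: field_simps)
          finally show ?thesis .
        qed
        also have "\<dots> < \<epsilon>"
        proof -
          have "2 * (1 - \<beta>) * dX < 2 * K * dX" using bb dpos by simp
          also have "2 * K * dX = \<epsilon> * q * (2 * dX) / (2 * dX + 1)" by (simp add: K_def)
          also have "\<dots> < \<epsilon> * q"
          proof -
            have "2 * dX < 2 * dX + 1" by simp
            hence "(2 * dX) / (2 * dX + 1) < 1" using dpos by simp
            hence "\<epsilon> * q * ((2 * dX) / (2 * dX + 1)) < \<epsilon> * q * 1" using \<epsilon> q by (intro mult_strict_left_mono) auto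
            thus ?thesis by simp
          qed
          finally have "2 * (1 - \<beta>) * dX < \<epsilon> * q" .
          thus ?thesis using q by (simp add: field_simps)
        qed
        finally show ?case using c by auto
      qed
    qed
    show ?thesis
    proof (intro conjI)
      show "\<forall>\<beta>\<in>{0<..<1}. B \<beta> > 0" using c3 by auto
      show "(A \<longlongrightarrow> 0) (at_left 1)"
      proof (rule tendstoI)
        fix \<epsilon> :: real assume "\<epsilon> > 0"
        from ev[OF this] show "\<forall>\<^sub>F \<beta> in at_left 1. dist (A \<beta>) 0 < \<epsilon>"
          by eventually_elim (auto simp: dist_real_def)
      qed
      show "(B \<longlongrightarrow> 0) (at_left 1)"
      proof (rule tendstoI)
        fix \<epsilon> :: real assume "\<epsilon> > 0"
        from ev[OF this] show "\<forall>\<^sub>F \<beta> in at_left 1. dist (B \<beta>) 0 < \<epsilon>"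
          by eventually_elim (auto simp: dist_real_def)
      qed
    qed
  qed
  have P4: "\<forall>\<beta>\<in>{0<..<1}. A \<beta> = 0 \<and> B \<beta> = 0" if s0: "s = 0" and dn: "dX \<le> 0"
  proof
    fix \<beta> :: real assume "\<beta> \<in> {0<..<1}"
    hence bb: "0 < \<beta>" "\<beta> < 1" by auto
    have "\<delta> - q * \<rho> - \<beta> * dX = (1 - \<beta>) * dX" using Ceq[of \<beta>] s0 by simp
    moreover have "(1 - \<beta>) * dX \<le> 0" using bb dn by (simp add: mult_nonneg_nonpos)
    ultimately show "A \<beta> = 0 \<and> B \<beta> = 0" using Sx.case_nonpos[OF SI[OF bb], of \<rho> dX] by (simp add: A_def B_def)
  qed
  show ?thesis using P1 P2 P3 P4 by (simp add: s_def)
qed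


end
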